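(* For integers $m\ge1$, $n\ge2$, $$S(2m,n,\pi/2)=(-1)^mn+\frac{1}{(2m-1)!}\sum_{k=1}^m n^{2k}A_{2m}^{(2k)}T_{2k-1},$$ $$S(m,n,\pi/4)=(-1)^{m/2}\,n\,\mathbb{1}_{m\text{ even}}+\frac{1}{2(m-1)!}\sum_{k=1}^m(2n)^kA_m^{(k)}E_{k-1}.$$
   Context: $S(m,n,\alpha)=\sum_{k=0}^{n-1}\cot^m\frac{\alpha+k\pi}{n}$. The arctangent numbers $A_m^{(k)}$ are defined by $\frac{(\arctan z)^k}{k!}=\sum_{m\ge k}\frac{A_m^{(k)}}{m!}z^m$. The tangent numbers $T_j$ are given by $\tan z=\sum_{j\ge0}\frac{T_j}{j!}z^j$. The Euler zigzag numbers $E_j$ are given by $\tan z+\sec z=\sum_{j\ge0}\frac{E_j}{j!}z^j$. $\mathbb{1}_{m\text{ even}}$ is $1$ if $m$ is even and $0$ otherwise. *)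

theory Defs
  imports "HOL-Analysis.Analysis"
begin

definition S :: "nat \<Rightarrow> nat \<Rightarrow> real \<Rightarrow> real" where
  "S m n \<alpha> = (\<Sum>k<n. cot ((\<alpha> + real k * pi) / real n) ^ m)"

text \<open>Coefficients of an exponential generating function: the m-th Taylor
  coefficient times m!, i.e. the m-th derivative at 0.\<close>

definition arctan_num :: "nat \<Rightarrow> nat \<Rightarrow> real" where
  "arctan_num m k = (deriv ^^ m) (\<lambda>z. arctan z ^ k / fact k) 0"

definition tangent_num :: "nat \<Rightarrow> real" where
  "tangent_num j = (deriv ^^ j) tan 0"

definition zigzag_num :: "nat \<Rightarrow> real" where
  "zigzag_num j = (deriv ^^ j) (\<lambda>z. tan z + 1 / cos z) 0"

end

theory Submission
  imports Defs
begin

lemma ga_exp: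
  fixes P Q E iq I x :: "'a::idom"
  assumes "P = 1 + I*x" "Q = 1 - I*x" "P*Q*iq = 1"
  shows "P*(2*I*E*iq*Q - E*I - I) = I*(E*Q - P)"
  using assms by algebra

lemma ga_lin:
  fixes Y Xc I X :: "'a::idom"
  assumes "(Y - 1) * Xc = I * (Y + 1)"
  shows "(1 - Xc * X) * (Y - 1) = Y * (1 - I * X) - (1 + I * X)"
  using assms by algebra

lemma ga_tan:
  fixes t si ic co I e1 e2 :: "'a::idom"
  assumes "t = si * ic" "co * ic = 1" "co^2 + si^2 = 1" "I * I = -1" "e1 = co + I * si" "e2 = e1^2"
  shows "t * (I * (e2 + 1)) = e2 - 1"
  using assms by algebra

lemma ga_sec:
  fixes si ic co I e1 e2 :: "'a::idom"
  assumes "co * ic = 1" "co^2 + si^2 = 1" "I * I = -1" "e1 = co + I * si" "e2 = e1^2"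
  shows "ic * (e2 + 1) = 2 * e1"
  using assms by algebra

lemma ga_TS1:
  fixes T Y B I W A :: "'a::idom"
  assumes "T*(I*Y) = W - 1" "I*I = -1" "W*B = A"
  shows "T*Y*B = -I*(A - B)"
  using assms by algebra

lemma ga_TS2:
  fixes T S Y B I W A :: "'a::idom"
  assumes "T*(I*Y) = W^2 - 1" "S*Y = 2*W" "I*I = -1" "W*B = A" "Y = W^2 + 1"
  shows "(T + S)*Y*B^2 = -I*(A^2 - B^2) + 2*A*B"
  using assms by algebra


definition fps_atan :: "'a::field_char_0 fps" where
  "fps_atan = Abs_fps (\<lambda>j. if even j then 0 else (-1) ^ (j div 2) / of_nat j)"

lemma real_fps_nth_expansion:
  fixes f :: "real \<Rightarrow> real"
  assumes "f has_fps_expansion F"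
  shows   "fps_nth F n = (deriv ^^ n) f 0 / fact n"
proof -
  have conv: "fps_nth F n = (deriv ^^ n) (eval_fps F) 0 / fact n" if "fps_conv_radius F > 0" for F :: "real fps"
    using that
  proof (induction n arbitrary: F)
    case 0
    thus ?case by (simp add: eval_fps_def)
  next
    case (Suc n F)
    have "(deriv ^^ Suc n) (eval_fps F) 0 = (deriv ^^ n) (deriv (eval_fps F)) 0"
      unfolding funpow_Suc_right o_def ..
    also have "eventually (\<lambda>z::real. z \<in> eball 0 (fps_conv_radius F)) (nhds 0)"
      using Suc.prems by (intro eventually_nhds_in_open) (auto simp: zero_ereal_def)
    hence "eventually (\<lambda>z. deriv (eval_fps F) z = eval_fps (fps_deriv F) z) (nhds 0)"
      by eventually_elim (simp add: eval_fps_deriv)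
    hence "(deriv ^^ n) (deriv (eval_fps F)) 0 = (deriv ^^ n) (eval_fps (fps_deriv F)) 0"
      by (intro higher_deriv_cong_ev refl)
    also have "\<dots> / fact n = fps_nth (fps_deriv F) n"
      using Suc.prems fps_conv_radius_deriv[of F]
      by (intro Suc.IH [symmetric]) auto
    also have "\<dots> / of_nat (Suc n) = fps_nth F (Suc n)"
      by (simp add: fps_deriv_def del: of_nat_Suc)
    finally show ?case by (simp add: field_split_simps)
  qed
  have "fps_nth F n = (deriv ^^ n) (eval_fps F) 0 / fact n"
    using assms by (intro conv) (auto simp: has_fps_expansion_def)
  also have "(deriv ^^ n) (eval_fps F) 0 = (deriv ^^ n) f 0"
    using assms by (intro higher_deriv_cong_ev) (auto simp: has_fps_expansion_def)
  finally show ?thesis .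
qed

lemma arctan_has_fps: "arctan has_fps_expansion (fps_atan :: real fps)"
proof (rule has_fps_expansionI)
  have "eventually (\<lambda>u::real. u \<in> ball 0 1) (nhds 0)"
    by (intro eventually_nhds_in_open) auto
  then show "eventually (\<lambda>u. (\<lambda>n. fps_nth fps_atan n * u ^ n) sums arctan u) (nhds 0)"
  proof eventually_elim
    case (elim u)
    hence u: "\<bar>u\<bar> \<le> 1" by auto
    have "(\<lambda>k. (-1)^k * (1 / real (k*2+1) * u ^ (k*2+1))) sums arctan u"
      using summable_arctan_series[OF u] arctan_series[OF u] by (simp add: sums_iff)
    from sums_if'[OF this]
    have "(\<lambda>n. if even n then 0 else (-1)^((n - 1) div 2) * (1 / real ((n - 1) div 2 * 2 + 1) * u ^ ((n - 1) div 2 * 2 + 1))) sums arctan u" .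
    also have "(\<lambda>n. if even n then 0 else (-1)^((n - 1) div 2) * (1 / real ((n - 1) div 2 * 2 + 1) * u ^ ((n - 1) div 2 * 2 + 1)))
        = (\<lambda>n. fps_nth fps_atan n * u ^ n)"
    proof
      fix n :: nat
      show "(if even n then 0 else (-1)^((n - 1) div 2) * (1 / real ((n - 1) div 2 * 2 + 1) * u ^ ((n - 1) div 2 * 2 + 1))) = fps_nth fps_atan n * u ^ n"
      proof (cases "even n")
        case False
        then obtain k where n: "n = 2*k+1" by (metis oddE)
        show ?thesis by (simp add: n fps_atan_def mult.commute)
      qed (simp add: fps_atan_def)
    qed
    finally show ?case .
  qed
qed

lemma has_fps_expansion_power':
  fixes F :: "'a :: {banach, real_normed_div_algebra, comm_ring_1} fps"
  assumes "f has_fps_expansion F"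
  shows "(\<lambda>x. f x ^ k) has_fps_expansion F ^ k"
  by (induction k) (auto intro!: fps_expansion_intros assms)

lemma arctan_num_fps: "arctan_num m k = fact m * fps_nth ((fps_atan :: real fps) ^ k) m / fact k"
proof -
  have "(\<lambda>z. arctan z ^ k * (1 / fact k)) has_fps_expansion (fps_atan ^ k * fps_const (1 / fact k))"
    by (intro fps_expansion_intros has_fps_expansion_power' arctan_has_fps)
  from real_fps_nth_expansion[OF this, of m] show ?thesis
    by (simp add: arctan_num_def field_simps)
qed

lemma tangent_num_fps: "tangent_num j = fact j * fps_nth (fps_tan (1::real)) j"
proof -
  from real_fps_nth_expansion[OF has_fps_expansion_tan', of j] show ?thesis
    by (simp add: tangent_num_def field_simps)
qed

lemma zigzag_num_fps: "zigzag_num j = fact j * fps_nth (fps_tan (1::real) + inverse (fps_cos 1)) j"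
proof -
  have "(\<lambda>z. tan z + inverse (cos z)) has_fps_expansion (fps_tan (1::real) + inverse (fps_cos 1))"
    by (intro fps_expansion_intros) auto
  from real_fps_nth_expansion[OF this, of j] show ?thesis
    by (simp add: zigzag_num_def field_simps inverse_eq_divide)
qed


definition fm :: "real fps \<Rightarrow> complex fps" where
  "fm F = Abs_fps (\<lambda>n. of_real (fps_nth F n))"

lemma fm_nth [simp]: "fps_nth (fm F) n = of_real (fps_nth F n)"
  by (simp add: fm_def)

lemma fm_add [simp]: "fm (F + G) = fm F + fm G"
  by (simp add: fps_eq_iff)

lemma fm_mult [simp]: "fm (F * G) = fm F * fm G"
  by (simp add: fps_eq_iff fps_mult_nth)

lemma fm_one [simp]: "fm 1 = 1"
  by (simp add: fps_eq_iff)

lemma fm_power [simp]: "fm (F ^ k) = fm F ^ k"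
  by (induction k) auto

lemma fm_inverse:
  assumes "fps_nth F 0 \<noteq> 0"
  shows "fm (inverse F) = inverse (fm F)"
proof -
  have "fm F * fm (inverse F) = 1"
    using assms by (simp flip: fm_mult add: inverse_mult_eq_1')
  from fps_inverse_unique[OF this] show ?thesis by simp
qed

lemma fm_sin [simp]: "fm (fps_sin c) = fps_sin (of_real c)"
  by (simp add: fps_eq_iff fps_sin_def)

lemma fm_cos [simp]: "fm (fps_cos c) = fps_cos (of_real c)"
  by (simp add: fps_eq_iff fps_cos_def)

lemma fm_tan [simp]: "fm (fps_tan c) = fps_tan (of_real c)"
  by (simp add: fps_tan_def fps_divide_unit fm_inverse)

lemma fm_atan [simp]: "fm fps_atan = fps_atan"
  by (simp add: fps_eq_iff fps_atan_def)


definition iq2 :: "'a::field_char_0 fps" where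
  "iq2 = Abs_fps (\<lambda>j. if even j then (-1) ^ (j div 2) else 0)"

lemma iq2_mult: "(1 + fps_X ^ 2) * (iq2 :: 'a::field_char_0 fps) = 1"
proof (rule fps_ext)
  fix n
  show "fps_nth ((1 + fps_X ^ 2) * (iq2 :: 'a fps)) n = fps_nth 1 n"
  proof (cases "n < 2")
    case True
    then show ?thesis by (auto simp: distrib_right fps_X_power_mult_nth iq2_def less_2_cases_iff)
  next
    case False
    then obtain k where k: "n = k + 2" by (metis add.commute le_Suc_ex not_less)
    show ?thesis by (auto simp: k distrib_right fps_X_power_mult_nth iq2_def)
  qed
qed

lemma iq2_eq: "inverse (1 + fps_X ^ 2) = (iq2 :: 'a::field_char_0 fps)"
  by (rule fps_inverse_unique[OF iq2_mult])

lemma one_plus_of_nat_neq0 [simp]: "(1::'a::semiring_char_0) + of_nat n \<noteq> 0"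
  by (metis of_nat_Suc of_nat_eq_0_iff nat.distinct(1))

lemma atan_deriv: "fps_deriv (fps_atan :: 'a::field_char_0 fps) = iq2"
proof (rule fps_ext)
  fix n
  show "fps_nth (fps_deriv (fps_atan :: 'a fps)) n = fps_nth iq2 n"
    by (cases "even n") (auto simp: fps_atan_def iq2_def)
qed

lemma atan_0 [simp]: "fps_nth fps_atan 0 = 0"
  by (simp add: fps_atan_def)

abbreviation PP :: "complex fps" where "PP \<equiv> 1 + fps_const \<i> * fps_X"
abbreviation QQ :: "complex fps" where "QQ \<equiv> 1 - fps_const \<i> * fps_X"

lemma II: "fps_const \<i> * fps_const \<i> = (-1 :: complex fps)"
  by (simp flip: fps_const_mult)

lemma PQ: "PP * QQ = 1 + fps_X ^ 2"
proof -
  have "PP * QQ = 1 - (fps_const \<i> * fps_const \<i>) * fps_X ^ 2"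
    by (simp add: algebra_simps power2_eq_square)
  also have "\<dots> = 1 + fps_X ^ 2" by (simp add: II)
  finally show ?thesis .
qed

lemma fps_const_2i: "fps_const (2*\<i>) = 2 * fps_const \<i>"
  by (simp flip: fps_const_mult)

lemma ode_zero:
  fixes W :: "complex fps"
  assumes "PP * fps_deriv W = fps_const \<i> * W" "fps_nth W 0 = 0"
  shows "W = 0"
proof -
  have eq: "fps_nth (PP * fps_deriv W) n = fps_nth (fps_const \<i> * W) n" for n
    using assms(1) by simp
  have "fps_nth W n = 0" for n
  proof (induction n)
    case 0 then show ?case using assms(2) by simp
  next
    case (Suc n)
    have "fps_nth (PP * fps_deriv W) n = of_nat (n+1) * fps_nth W (Suc n) + (if n = 0 then 0 else \<i> * (of_nat n * fps_nth W n))"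
      by (cases n) (auto simp: distrib_right mult.assoc)
    with eq[of n] Suc.IH have "of_nat (n+1) * fps_nth W (Suc n) = 0"
      by (auto split: if_splits)
    then show ?case by (simp del: of_nat_Suc of_nat_add)
  qed
  then show ?thesis by (simp add: fps_eq_iff)
qed

lemma exp_atan: "fps_exp (2*\<i>) oo fps_atan = PP * inverse QQ"
proof -
  define E where "E = fps_exp (2*\<i>) oo (fps_atan :: complex fps)"
  have dE: "fps_deriv E = fps_const (2*\<i>) * E * iq2"
    unfolding E_def
    by (simp add: fps_compose_deriv atan_deriv fps_compose_mult_distrib)
  define W where "W = E * QQ - PP"
  have pq: "PP * QQ * iq2 = 1" by (simp add: PQ iq2_mult)
  have "PP * fps_deriv W = fps_const \<i> * W"
  proof -
    have "fps_deriv W = fps_const (2*\<i>) * E * iq2 * QQ - E * fps_const \<i> - fps_const \<i>"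
      by (simp add: W_def dE) (metis fps_const_neg mult_minus_right)
    moreover have "PP*(2*fps_const \<i>*E*iq2*QQ - E*fps_const \<i> - fps_const \<i>) = fps_const \<i>*(E*QQ - PP)"
      by (rule ga_exp[OF refl refl pq])
    ultimately show ?thesis unfolding W_def
      by (simp add: fps_const_2i mult.assoc)
  qed
  moreover have "fps_nth W 0 = 0" by (simp add: W_def E_def)
  ultimately have "W = 0" by (rule ode_zero)
  hence "E * QQ = PP" by (simp add: W_def)
  hence "E * QQ * inverse QQ = PP * inverse QQ" by simp
  moreover have "QQ * inverse QQ = 1" by (simp add: inverse_mult_eq_1')
  ultimately show ?thesis by (simp add: E_def mult.assoc)
qed


lemma exp_2it: "exp (2 * \<i> * complex_of_real t) = cis (2 * t)"
  by (simp add: cis_conv_exp mult.commute mult.left_commute)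

lemma cot_rel:
  assumes "sin t \<noteq> 0"
  shows "(exp (2 * \<i> * complex_of_real t) - 1) * complex_of_real (cot t) = \<i> * (exp (2 * \<i> * complex_of_real t) + 1)"
proof -
  have c2: "cos (2*t) = cos t * cos t - sin t * sin t" by (simp add: cos_double power2_eq_square)
  have s2: "sin (2*t) = 2 * sin t * cos t" by (simp add: sin_double)
  have c2': "cos (t*2) = cos t * cos t - sin t * sin t" using c2 by (simp add: mult.commute)
  have s2': "sin (t*2) = 2 * sin t * cos t" using s2 by (simp add: mult.commute)
  have sc: "sin t * sin t = 1 - cos t * cos t" using sin_squared_eq[of t] by (simp add: power2_eq_square)
  have "(cis (2*t) - 1) * complex_of_real (cot t) = \<i> * (cis (2*t) + 1)"
  proof (rule complex_eqI)
    show "Re ((cis (2*t) - 1) * complex_of_real (cot t)) = Re (\<i> * (cis (2*t) + 1))"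
      using assms by (simp add: cot_def c2 s2 c2' s2' field_simps) (metis distrib_left mult_1_right sin_cos_squared_add3)
    show "Im ((cis (2*t) - 1) * complex_of_real (cot t)) = Im (\<i> * (cis (2*t) + 1))"
      using assms by (simp add: cot_def c2 s2 c2' s2' field_simps)
  qed
  then show ?thesis by (simp add: exp_2it)
qed


lemma omega_pow_neq1:
  assumes "0 < j" "j < n"
  shows "exp (2 * \<i> * complex_of_real (pi / real n)) ^ j \<noteq> 1"
proof
  assume "exp (2 * \<i> * complex_of_real (pi / real n)) ^ j = 1"
  hence "exp (of_nat j * (2 * \<i> * complex_of_real (pi / real n))) = 1"
    by (metis exp_of_nat_mult)
  then obtain m :: int where "real j * (2 * (pi / real n)) = of_int (2*m) * pi"
    by (auto simp: exp_eq_1)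
  hence "real j = real n * of_int m" using assms by (simp add: field_simps)
  hence "int j = int n * m" by (metis of_int_eq_iff of_int_mult of_int_of_nat_eq)
  hence "int n dvd int j" by simp
  hence "n dvd j" by simp
  with assms show False by (meson nat_dvd_not_less)
qed

lemma fps_const_sum': "fps_const (sum f A) = (\<Sum>x\<in>A. fps_const (f x))"
  by (auto simp: fps_eq_iff fps_sum_nth)

lemma fc_diff1: "fps_const (a - 1) = fps_const a - (1 :: complex fps)"
  by (metis fps_const_1_eq_1 fps_const_sub)

lemma root_sum:
  fixes \<alpha> :: real and n :: nat
  assumes n: "n \<ge> 2" and a: "0 < \<alpha>" "\<alpha> < pi"
  assumes z1: "exp (2 * \<i> * complex_of_real \<alpha>) \<noteq> 1"
  shows "(\<Sum>k<n. inverse (1 - fps_const (complex_of_real (cot ((\<alpha> + real k * pi) / real n))) * fps_X))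
           * (fps_const (exp (2 * \<i> * complex_of_real \<alpha>)) * QQ^n - PP^n)
         = fps_const (of_nat n) * (fps_const (exp (2 * \<i> * complex_of_real \<alpha>)) * QQ^(n-1) - PP^(n-1))"
proof -
  define z where "z = exp (2 * \<i> * complex_of_real \<alpha>)"
  define \<theta> where "\<theta> k = (\<alpha> + real k * pi) / real n" for k
  define x where "x k = complex_of_real (cot (\<theta> k))" for k
  define y where "y k = exp (2 * \<i> * complex_of_real (\<theta> k))" for k
  define \<zeta> where "\<zeta> = exp (2 * \<i> * complex_of_real (\<alpha> / real n))"
  define \<omega> where "\<omega> = exp (2 * \<i> * complex_of_real (pi / real n))"
  have npos: "real n > 0" using n by simp
  have sin_nz: "sin (\<theta> k) \<noteq> 0" if "k < n" for k
  proof -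
    have "0 < \<alpha> + real k * pi" using a by (intro add_pos_nonneg) auto
    hence "0 < \<theta> k" using npos by (simp add: \<theta>_def)
    moreover have "\<alpha> + real k * pi < real n * pi"
    proof -
      have "real k + 1 \<le> real n" using that by simp
      hence "(real k + 1) * pi \<le> real n * pi" by (simp add: mult_right_mono)
      thus ?thesis using a by (simp add: algebra_simps)
    qed
    hence "\<theta> k < pi" using npos by (simp add: \<theta>_def field_simps)
    ultimately show ?thesis using sin_gt_zero by force
  qed
  have rel: "(y k - 1) * x k = \<i> * (y k + 1)" if "k < n" for k
    unfolding x_def y_def by (rule cot_rel[OF sin_nz[OF that]])
  have y_eq: "y k = \<zeta> * \<omega> ^ k" for k
  proof -
    have "2 * \<i> * complex_of_real (\<theta> k) = 2 * \<i> * complex_of_real (\<alpha> / real n) + of_nat k * (2 * \<i> * complex_of_real (pi / real n))"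
      by (simp add: \<theta>_def add_divide_distrib algebra_simps)
    thus ?thesis unfolding y_def \<zeta>_def \<omega>_def by (simp only: exp_add exp_of_nat_mult)
  qed
  have zeta_n: "\<zeta> ^ n = z"
  proof -
    have "\<zeta> ^ n = exp (of_nat n * (2 * \<i> * complex_of_real (\<alpha> / real n)))"
      by (simp only: \<zeta>_def exp_of_nat_mult)
    also have "of_nat n * (2 * \<i> * complex_of_real (\<alpha> / real n)) = 2 * \<i> * complex_of_real \<alpha>"
      using npos by (simp add: field_simps)
    finally show ?thesis by (simp add: z_def)
  qed
  have omega_n: "\<omega> ^ n = 1"
  proof -
    have "\<omega> ^ n = exp (of_nat n * (2 * \<i> * complex_of_real (pi / real n)))"
      by (simp only: \<omega>_def exp_of_nat_mult)
    also have "of_nat n * (2 * \<i> * complex_of_real (pi / real n)) = 2 * pi * \<i>"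
      using npos by (simp add: field_simps)
    finally show ?thesis by simp
  qed
  define c where "c j = (\<Sum>k<n. y k ^ j)" for j
  have c0: "c 0 = of_nat n" by (simp add: c_def)
  have cn: "c n = of_nat n * z"
  proof -
    have "y k ^ n = z" for k
      by (simp add: y_eq power_mult_distrib zeta_n flip: power_mult) (simp add: power_mult[symmetric] mult.commute[of k] power_mult omega_n)
    thus ?thesis by (simp add: c_def)
  qed
  have cmid: "c j = 0" if "0 < j" "j < n" for j
  proof -
    have "c j = \<zeta> ^ j * (\<Sum>k<n. (\<omega> ^ j) ^ k)"
      by (simp add: c_def y_eq power_mult_distrib sum_distrib_left flip: power_mult)
        (simp add: power_mult[symmetric] mult.commute)
    also have "(\<Sum>k<n. (\<omega> ^ j) ^ k) = 0"
    proof -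
      have "(\<omega> ^ j) ^ n = 1" by (simp add: power_mult[symmetric] mult.commute[of j] power_mult omega_n)
      thus ?thesis using omega_pow_neq1[OF that] by (simp add: sum_gp_strict \<omega>_def)
    qed
    finally show ?thesis by simp
  qed
  have yn: "y k ^ n = z" for k
    by (simp add: y_eq power_mult_distrib zeta_n flip: power_mult) (simp add: power_mult[symmetric] mult.commute[of k] power_mult omega_n)
  define D where "D = fps_const z * QQ^n - PP^n"
  have D0: "fps_nth D 0 \<noteq> 0" using z1 by (simp add: D_def fps_nth_power_0 z_def)
  define S where "S k = (\<Sum>i<n. PP^(n - Suc i) * (fps_const (y k) * QQ)^i)" for k
  have DS: "(fps_const (y k) * QQ - PP) * S k = D" for k
  proof -
    have "(fps_const (y k) * QQ)^n - PP^n = (fps_const (y k) * QQ - PP) * S k"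
      unfolding S_def by (rule power_diff_sumr2)
    moreover have "(fps_const (y k) * QQ)^n = fps_const z * QQ^n"
      by (simp add: power_mult_distrib fps_const_power yn)
    ultimately show ?thesis by (simp add: D_def)
  qed
  have lin: "(1 - fps_const (x k) * fps_X) * fps_const (y k - 1) = fps_const (y k) * QQ - PP" if "k < n" for k
  proof -
    have h: "(fps_const (y k) - 1) * fps_const (x k) = fps_const \<i> * (fps_const (y k) + 1)"
      using rel[OF that] by (metis fps_const_1_eq_1 fps_const_sub fps_const_add fps_const_mult)
    from ga_lin[OF h] show ?thesis by (simp only: fc_diff1)
  qed
  have inv_k: "inverse (1 - fps_const (x k) * fps_X) = fps_const (y k - 1) * S k * inverse D" if "k < n" for k
  proof (rule fps_inverse_unique)
    have "(1 - fps_const (x k) * fps_X) * (fps_const (y k - 1) * S k * inverse D)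
        = ((1 - fps_const (x k) * fps_X) * fps_const (y k - 1)) * S k * inverse D"
      by (simp add: mult.assoc)
    also have "\<dots> = D * inverse D" by (simp add: lin[OF that] DS)
    also have "\<dots> = 1" using D0 by (simp add: inverse_mult_eq_1')
    finally show "(1 - fps_const (x k) * fps_X) * (fps_const (y k - 1) * S k * inverse D) = 1" .
  qed
  have "(\<Sum>k<n. inverse (1 - fps_const (x k) * fps_X)) * D = (\<Sum>k<n. fps_const (y k - 1) * S k) * (inverse D * D)"
    by (simp add: inv_k sum_distrib_right mult.assoc)
  also have "inverse D * D = 1" using D0 by (simp add: inverse_mult_eq_1)
  also have "(\<Sum>k<n. fps_const (y k - 1) * S k) = (\<Sum>i<n. fps_const (c (Suc i) - c i) * (PP^(n - Suc i) * QQ^i))"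
  proof -
    have "(\<Sum>k<n. fps_const (y k - 1) * S k) = (\<Sum>k<n. \<Sum>i<n. fps_const ((y k - 1) * y k ^ i) * (PP^(n - Suc i) * QQ^i))"
      by (simp add: S_def sum_distrib_left power_mult_distrib fps_const_power mult_ac flip: fps_const_mult)
    also have "\<dots> = (\<Sum>i<n. \<Sum>k<n. fps_const ((y k - 1) * y k ^ i) * (PP^(n - Suc i) * QQ^i))"
      by (rule sum.swap)
    also have "\<dots> = (\<Sum>i<n. fps_const (\<Sum>k<n. (y k - 1) * y k ^ i) * (PP^(n - Suc i) * QQ^i))"
      by (simp only: fps_const_sum' sum_distrib_right)
    also have "\<dots> = (\<Sum>i<n. fps_const (c (Suc i) - c i) * (PP^(n - Suc i) * QQ^i))"
    proof -
      have "(\<Sum>k<n. (y k - 1) * y k ^ i) = c (Suc i) - c i" for i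
        by (simp add: c_def algebra_simps sum_subtractf)
      thus ?thesis by simp
    qed
    finally show ?thesis .
  qed
  also have "\<dots> = (\<Sum>i<n. (if i = n - 1 then fps_const (of_nat n * z) * (PP^(n - Suc i) * QQ^i) else 0)
                   - (if i = 0 then fps_const (of_nat n) * (PP^(n - Suc i) * QQ^i) else 0))"
  proof (rule sum.cong[OF refl])
    fix i assume i: "i \<in> {..<n}"
    show "fps_const (c (Suc i) - c i) * (PP^(n - Suc i) * QQ^i) = (if i = n - 1 then fps_const (of_nat n * z) * (PP^(n - Suc i) * QQ^i) else 0)
                   - (if i = 0 then fps_const (of_nat n) * (PP^(n - Suc i) * QQ^i) else 0)"
      using i n cmid[of i] cmid[of "Suc i"] c0 cn
      by (cases "i = 0"; cases "i = n - 1") (auto simp: Suc_diff_Suc)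
  qed
  also have "\<dots> = fps_const (of_nat n * z) * QQ^(n-1) - fps_const (of_nat n) * PP^(n-1)"
    using n by (simp add: sum_subtractf)
  finally show ?thesis
    by (simp add: D_def x_def \<theta>_def z_def algebra_simps flip: fps_const_mult)

qed


lemma cos_inv: "fps_cos (c::complex) * inverse (fps_cos c) = 1"
  by (simp add: inverse_mult_eq_1')

lemma e2_eq: "fps_exp (2 * \<i> * (c::complex)) = fps_exp (\<i> * c) ^ 2"
  by (simp add: fps_exp_power_mult mult.assoc)

lemma tan_exp:
  "fps_tan (c::complex) * (fps_const \<i> * (fps_exp (2*\<i>*c) + 1)) = fps_exp (2*\<i>*c) - 1"
proof -
  have t: "fps_tan c = fps_sin c * inverse (fps_cos c)"
    by (simp add: fps_tan_def fps_divide_unit)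
  from ga_tan[OF t cos_inv fps_sin_cos_sum_of_squares II fps_exp_ii_sin_cos e2_eq] show ?thesis .
qed

lemma sec_exp:
  "inverse (fps_cos (c::complex)) * (fps_exp (2*\<i>*c) + 1) = 2 * fps_exp (\<i> * c)"
proof -
  from ga_sec[OF cos_inv fps_sin_cos_sum_of_squares II fps_exp_ii_sin_cos e2_eq] show ?thesis .
qed

lemma exp_atan_n: "fps_exp (\<i> * (2 * of_nat n)) oo fps_atan = (PP * inverse QQ) ^ n"
proof -
  have "fps_exp (\<i> * (2 * of_nat n)) = fps_exp (2 * \<i>) ^ n"
    by (simp add: fps_exp_power_mult mult_ac)
  hence "fps_exp (\<i> * (2 * of_nat n)) oo fps_atan = (fps_exp (2 * \<i>) oo fps_atan) ^ n"
    by (simp add: fps_compose_power)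
  thus ?thesis by (simp add: exp_atan)
qed

lemma tan_atan:
  "(fps_tan (of_nat n :: complex) oo fps_atan) * (fps_const \<i> * ((PP * inverse QQ) ^ n + 1)) = (PP * inverse QQ) ^ n - 1"
proof -
  have "(fps_tan (of_nat n :: complex) * (fps_const \<i> * (fps_exp (2*\<i> * of_nat n) + 1))) oo fps_atan
      = (fps_exp (2*\<i> * of_nat n) - 1) oo fps_atan"
    by (simp only: tan_exp)
  moreover have "fps_exp (2*\<i> * of_nat n) oo fps_atan = (PP * inverse QQ) ^ n"
    using exp_atan_n[of n] by (simp add: mult_ac)
  ultimately show ?thesis
    by (simp add: fps_compose_mult_distrib fps_compose_add_distrib fps_compose_sub_distrib)
qed

lemma sec_atan:
  "(inverse (fps_cos (of_nat (2*n) :: complex)) oo fps_atan) * ((PP * inverse QQ) ^ (2*n) + 1) = 2 * (PP * inverse QQ) ^ n"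
proof -
  have "(inverse (fps_cos (of_nat (2*n) :: complex)) * (fps_exp (2*\<i> * of_nat (2*n)) + 1)) oo fps_atan
      = (2 * fps_exp (\<i> * of_nat (2*n))) oo fps_atan"
    by (simp only: sec_exp)
  moreover have "fps_exp (2*\<i> * of_nat (2*n)) oo fps_atan = (PP * inverse QQ) ^ (2*n)"
    using exp_atan_n[of "2*n"] by (simp add: mult_ac)
  moreover have "fps_exp (\<i> * of_nat (2*n)) oo fps_atan = (PP * inverse QQ) ^ n"
    using exp_atan_n[of "n"] by (simp add: mult_ac)
  ultimately show ?thesis
    by (simp add: fps_compose_mult_distrib fps_compose_add_distrib fps_compose_sub_distrib)
qed


lemma alg1:
  fixes GF N T P Q iq2 a b I X Y A B :: "'a::idom"
  assumes PQ: "P = 1 + I*X" "Q = 1 - I*X" and I: "I*I = -1" and iq: "iq2*(P*Q) = 1"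
   and AB: "A = P*a" "B = Q*b"
   and Y: "Y*B = A + B"
   and TS: "T*Y*B = -I*(A - B)"
   and GF: "GF*(-B - A) = N*(-b - a)"
  shows "N*iq2*(1 + X*T) * (-B - A) * (Y * B) = GF * (-B - A) * (Y * B)"
proof -
  have s1: "N*iq2*(1 + X*T) * (-B - A) * (Y * B) = N*iq2*((-B - A)*(Y*B + X*(T*Y*B)))"
    by algebra
  have "(-B - A)*(Y*B + X*(T*Y*B)) = -(A + B)*(Q*A + P*B)"
    unfolding Y TS using PQ I by algebra
  also have "\<dots> = -(P*Q)*(a + b)*(A + B)"
    using AB by algebra
  finally have s2: "(-B - A)*(Y*B + X*(T*Y*B)) = -(P*Q)*(a + b)*(A + B)" .
  have "N*iq2*(1 + X*T) * (-B - A) * (Y * B) = -N*(iq2*(P*Q))*(a + b)*(A + B)"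
    unfolding s1 s2 by algebra
  also have "\<dots> = GF * (-B - A) * (Y * B)"
    unfolding iq GF Y by algebra
  finally show ?thesis .
qed

lemma alg2:
  fixes GF N TS P Q iq2 a b I X Y A B :: "'a::idom"
  assumes PQ: "P = 1 + I*X" "Q = 1 - I*X" and I: "I*I = -1" and iq: "iq2*(P*Q) = 1"
   and AB: "A = P*a" "B = Q*b" 
   and Y: "Y*B^2 = A^2 + B^2"
   and TS: "TS*Y*B^2 = -I*(A^2 - B^2) + 2*A*B"
   and GF: "GF*(I*B - A) = N*(I*b - a)"
  shows "N*iq2*(1 + X*TS) * (I*B - A) * (Y * B^2) = GF * (I*B - A) * (Y * B^2)"
proof -
  have s1: "N*iq2*(1 + X*TS) * (I*B - A) * (Y * B^2) = N*iq2*((I*B - A)*(Y*B^2 + X*(TS*Y*B^2)))"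
    by algebra
  have "(I*B - A)*(Y*B^2 + X*(TS*Y*B^2)) = (I*B - A)*(Q*A^2 + P*B^2 + 2*X*A*B)"
    unfolding Y TS using PQ I by algebra
  also have "\<dots> = (I*P*B - Q*A)*(A^2+B^2)"
    using PQ I by algebra
  also have "\<dots> = (P*Q)*(I*b - a)*(A^2+B^2)"
    using AB by algebra
  finally have s2: "(I*B - A)*(Y*B^2 + X*(TS*Y*B^2)) = (P*Q)*(I*b - a)*(A^2+B^2)" .
  have "N*iq2*(1 + X*TS) * (I*B - A) * (Y * B^2) = N*(iq2*(P*Q))*(I*b - a)*(A^2+B^2)"
    unfolding s1 s2 by algebra
  also have "\<dots> = GF * (I*B - A) * (Y * B^2)"
    unfolding iq GF Y by algebra
  finally show ?thesis .
qed

lemma iqPQ: "iq2 * (PP * QQ) = 1"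
  by (metis PQ iq2_mult mult.commute)

lemma WB: "(PP * inverse QQ) ^ n * QQ ^ n = PP ^ n"
proof -
  have "(PP * inverse QQ) ^ n * QQ ^ n = PP ^ n * (inverse QQ * QQ) ^ n"
    by (simp add: power_mult_distrib mult_ac)
  also have "inverse QQ * QQ = 1" by (simp add: inverse_mult_eq_1)
  finally show ?thesis by simp
qed

lemma W0: "fps_nth ((PP * inverse QQ) ^ n) 0 = 1"
  by (simp add: fps_nth_power_0)

lemma fcm1: "fps_const (-1::complex) = -1"
  by (metis fps_const_1_eq_1 fps_const_neg)

lemma cancel3: "x * y * z = w * y * z \<Longrightarrow> y \<noteq> 0 \<Longrightarrow> z \<noteq> (0::'a::idom) \<Longrightarrow> x = w"
  by simp

lemma GF_half:
  assumes n: "n \<ge> 2"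
  shows "(\<Sum>k<n. inverse (1 - fps_const (complex_of_real (cot ((pi/2 + real k * pi) / real n))) * fps_X))
         = fps_const (of_nat n) * iq2 * (1 + fps_X * (fps_tan (of_nat n) oo fps_atan))"
proof -
  define GF where "GF = (\<Sum>k<n. inverse (1 - fps_const (complex_of_real (cot ((pi/2 + real k * pi) / real n))) * fps_X))"
  have z: "exp (2 * \<i> * complex_of_real (pi/2)) = -1"
    using exp_2it[of "pi/2"] by simp
  have rs: "GF * (fps_const (-1) * QQ^n - PP^n) = fps_const (of_nat n) * (fps_const (-1) * QQ^(n-1) - PP^(n-1))"
    using root_sum[of n "pi/2"] n unfolding z GF_def by simp
  obtain m where m: "n = Suc m" using n by (cases n) auto
  define W where "W = (PP * inverse QQ) ^ n"
  define T where "T = fps_tan (of_nat n) oo (fps_atan :: complex fps)"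
  have tan: "T * (fps_const \<i> * (W + 1)) = W - 1" unfolding T_def W_def by (rule tan_atan)
  have wb: "W * QQ^n = PP^n" unfolding W_def by (rule WB)
  have Y: "(W + 1) * QQ^n = PP^n + QQ^n" using wb by (simp add: algebra_simps)
  have TS: "T * (W + 1) * QQ^n = - fps_const \<i> * (PP^n - QQ^n)"
  proof -
    from ga_TS1[OF tan II wb] show ?thesis .
  qed
  have "fps_const (of_nat n) * iq2 * (1 + fps_X * T) * (- (QQ^n) - PP^n) * ((W + 1) * QQ^n)
      = GF * (- (QQ^n) - PP^n) * ((W + 1) * QQ^n)"
  proof (rule alg1[where P = PP and Q = QQ and I = "fps_const \<i>" and a = "PP^m" and b = "QQ^m"])
    show "iq2 * (PP * QQ) = 1" by (rule iqPQ)
    show "fps_const \<i> * fps_const \<i> = (-1 :: complex fps)" by (rule II)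
    show "PP ^ n = PP * PP ^ m" "QQ ^ n = QQ * QQ ^ m" by (simp_all add: m)
    show "(W + 1) * QQ ^ n = PP ^ n + QQ ^ n" by (rule Y)
    show "T * (W + 1) * QQ ^ n = - fps_const \<i> * (PP ^ n - QQ ^ n)" by (rule TS)
    show "GF * (- (QQ ^ n) - PP ^ n) = fps_const (of_nat n) * (- (QQ ^ m) - PP ^ m)"
      using rs by (simp add: m fcm1)
  qed auto
  moreover have "(- (QQ^n) - PP^n) \<noteq> 0"
  proof -
    have "fps_nth (- (QQ^n) - PP^n) 0 = -2" by (simp add: fps_nth_power_0)
    thus ?thesis by (metis fps_zero_nth neg_equal_0_iff_equal zero_neq_numeral)
  qed
  moreover have "(W + 1) * QQ^n \<noteq> 0"
  proof -
    have "fps_nth ((W + 1) * QQ^n) 0 = 2" by (simp add: fps_nth_power_0 W_def)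
    thus ?thesis by (metis fps_zero_nth zero_neq_numeral)
  qed
  ultimately have "fps_const (of_nat n) * iq2 * (1 + fps_X * T) = GF" by (rule cancel3)
  thus ?thesis by (simp add: GF_def T_def)
qed

lemma GF_quarter:
  assumes n: "n \<ge> 2"
  shows "(\<Sum>k<n. inverse (1 - fps_const (complex_of_real (cot ((pi/4 + real k * pi) / real n))) * fps_X))
         = fps_const (of_nat n) * iq2 * (1 + fps_X * ((fps_tan (of_nat (2*n)) + inverse (fps_cos (of_nat (2*n)))) oo fps_atan))"
proof -
  define GF where "GF = (\<Sum>k<n. inverse (1 - fps_const (complex_of_real (cot ((pi/4 + real k * pi) / real n))) * fps_X))"
  have z: "exp (2 * \<i> * complex_of_real (pi/4)) = \<i>"
  proof -
    have "cis (2*(pi/4)) = \<i>" by (simp add: complex_eq_iff)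
    thus ?thesis using exp_2it[of "pi/4"] by simp
  qed
  have rs: "GF * (fps_const \<i> * QQ^n - PP^n) = fps_const (of_nat n) * (fps_const \<i> * QQ^(n-1) - PP^(n-1))"
    using root_sum[of n "pi/4"] n unfolding z GF_def by simp
  obtain m where m: "n = Suc m" using n by (cases n) auto
  define W where "W = (PP * inverse QQ) ^ n"
  define T where "T = fps_tan (of_nat (2*n)) oo (fps_atan :: complex fps)"
  define Se where "Se = inverse (fps_cos (of_nat (2*n))) oo (fps_atan :: complex fps)"
  have W2: "(PP * inverse QQ) ^ (2*n) = W^2" unfolding W_def by (simp add: power_mult mult.commute)
  have tan: "T * (fps_const \<i> * (W^2 + 1)) = W^2 - 1" using tan_atan[of "2*n"] unfolding T_def W2 .
  have sec: "Se * (W^2 + 1) = 2 * W" using sec_atan[of n] unfolding Se_def W2 W_def .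
  have wb: "W * QQ^n = PP^n" unfolding W_def by (rule WB)
  have Y: "(W^2 + 1) * (QQ^n)^2 = (PP^n)^2 + (QQ^n)^2"
  proof -
    have "Y*B^2 = A^2 + B^2" if "W*B = A" "Y = W^2 + 1" for Y B W A :: "complex fps"
    proof -
      have "Y*B^2 = (W*B)^2 + B^2" using that(2) by (simp add: power2_eq_square algebra_simps)
      thus ?thesis using that(1) by simp
    qed
    from this[OF wb refl] show ?thesis .
  qed
  have TS: "(T + Se) * (W^2 + 1) * (QQ^n)^2 = - fps_const \<i> * ((PP^n)^2 - (QQ^n)^2) + 2 * PP^n * QQ^n"
  proof -
    from ga_TS2[OF tan sec II wb refl] show ?thesis .
  qed
  have "fps_const (of_nat n) * iq2 * (1 + fps_X * (T + Se)) * (fps_const \<i> * QQ^n - PP^n) * ((W^2 + 1) * (QQ^n)^2)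
      = GF * (fps_const \<i> * QQ^n - PP^n) * ((W^2 + 1) * (QQ^n)^2)"
  proof (rule alg2[where P = PP and Q = QQ and I = "fps_const \<i>" and a = "PP^m" and b = "QQ^m"])
    show "iq2 * (PP * QQ) = 1" by (rule iqPQ)
    show "fps_const \<i> * fps_const \<i> = (-1 :: complex fps)" by (rule II)
    show "PP ^ n = PP * PP ^ m" "QQ ^ n = QQ * QQ ^ m" by (simp_all add: m)
    show "(W^2 + 1) * (QQ^n)^2 = (PP^n)^2 + (QQ^n)^2" by (rule Y)
    show "(T + Se) * (W^2 + 1) * (QQ^n)^2 = - fps_const \<i> * ((PP^n)^2 - (QQ^n)^2) + 2 * PP^n * QQ^n" by (rule TS)
    show "GF * (fps_const \<i> * QQ^n - PP^n) = fps_const (of_nat n) * (fps_const \<i> * QQ^m - PP^m)"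
      using rs by (simp add: m)
  qed auto
  moreover have "fps_const \<i> * QQ^n - PP^n \<noteq> 0"
  proof -
    have "fps_nth (fps_const \<i> * QQ^n - PP^n) 0 = \<i> - 1" by (simp add: fps_nth_power_0)
    moreover have "\<i> - 1 \<noteq> 0" by (simp add: complex_eq_iff)
    ultimately show ?thesis by (metis fps_zero_nth)
  qed
  moreover have "(W^2 + 1) * (QQ^n)^2 \<noteq> 0"
  proof -
    have "fps_nth ((W^2 + 1) * (QQ^n)^2) 0 = 2" by (simp add: fps_nth_power_0 W_def)
    thus ?thesis by (metis fps_zero_nth zero_neq_numeral)
  qed
  ultimately have "fps_const (of_nat n) * iq2 * (1 + fps_X * (T + Se)) = GF" by (rule cancel3)
  thus ?thesis by (simp add: GF_def T_def Se_def fps_compose_add_distrib)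
qed


lemma fm_compose: "fm (F oo G) = fm F oo fm G"
proof (rule fps_ext)
  fix n
  have "fps_nth (fm (F oo G)) n = (\<Sum>i=0..n. of_real (fps_nth F i) * of_real (fps_nth (G^i) n))"
    by (simp add: fps_compose_nth)
  also have "\<dots> = (\<Sum>i=0..n. fps_nth (fm F) i * fps_nth (fm (G^i)) n)"
    by (simp only: fm_nth)
  also have "\<dots> = fps_nth (fm F oo fm G) n"
    by (simp only: fm_power fps_compose_nth)
  finally show "fps_nth (fm (F oo G)) n = fps_nth (fm F oo fm G) n" .
qed

lemma fm_inj: "fm F = fm G \<Longrightarrow> F = G"
  by (simp add: fps_eq_iff fm_def)

lemma fm_const [simp]: "fm (fps_const c) = fps_const (of_real c)"
  by (simp add: fps_eq_iff)

lemma fm_X [simp]: "fm fps_X = fps_X"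
  by (simp add: fps_eq_iff fps_X_def)

lemma fm_diff [simp]: "fm (F - G) = fm F - fm G"
  by (simp add: fps_eq_iff)

lemma fm_sum [simp]: "fm (sum f A) = (\<Sum>x\<in>A. fm (f x))"
  by (simp add: fps_eq_iff fps_sum_nth)

lemma fm_iq2 [simp]: "fm iq2 = iq2"
  by (simp add: fps_eq_iff iq2_def)

lemma fm_geo: "fm (inverse (1 - fps_const c * fps_X)) = inverse (1 - fps_const (of_real c) * fps_X)"
  by (subst fm_inverse) auto

lemma GF_half_real:
  assumes n: "n \<ge> 2"
  shows "(\<Sum>k<n. inverse (1 - fps_const (cot ((pi/2 + real k * pi) / real n)) * fps_X))
         = fps_const (real n) * iq2 * (1 + fps_X * (fps_tan (real n) oo fps_atan))"
  apply (rule fm_inj)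
  using GF_half[OF n] by (simp add: fm_geo fm_compose)

lemma GF_quarter_real:
  assumes n: "n \<ge> 2"
  shows "(\<Sum>k<n. inverse (1 - fps_const (cot ((pi/4 + real k * pi) / real n)) * fps_X))
         = fps_const (real n) * iq2 * (1 + fps_X * ((fps_tan (real (2*n)) + inverse (fps_cos (real (2*n)))) oo fps_atan))"
  apply (rule fm_inj)
  using GF_quarter[OF n] by (simp add: fm_geo fm_compose fm_inverse)


lemma geo_nth: "fps_nth (inverse (1 - fps_const (c::real) * fps_X)) j = c ^ j"
proof -
  have "(1 - fps_const c * fps_X) * Abs_fps (\<lambda>j. c ^ j) = 1"
  proof (rule fps_ext)
    fix n show "fps_nth ((1 - fps_const c * fps_X) * Abs_fps (\<lambda>j. c ^ j)) n = fps_nth 1 n"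
      by (cases n) (auto simp: algebra_simps mult.assoc)
  qed
  from fps_inverse_unique[OF this] show ?thesis by simp
qed

lemma GF_nth: "fps_nth (\<Sum>k<n. inverse (1 - fps_const (cot ((\<alpha> + real k * pi) / real n)) * fps_X)) j = S j n \<alpha>"
  by (simp add: fps_sum_nth geo_nth S_def)

lemma sin_scale: "fps_sin (c::real) = fps_sin 1 oo (fps_const c * fps_X)"
  by (simp add: fps_compose_linear fps_eq_iff fps_sin_def)

lemma cos_scale: "fps_cos (c::real) = fps_cos 1 oo (fps_const c * fps_X)"
  by (simp add: fps_compose_linear fps_eq_iff fps_cos_def)

lemma tan_scale_fps: "fps_tan (c::real) = fps_tan 1 oo (fps_const c * fps_X)"
  unfolding fps_tan_def
  by (subst fps_divide_compose) (simp_all add: sin_scale[of c] cos_scale[of c])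

lemma tan_scale: "fps_nth (fps_tan (c::real)) j = c ^ j * fps_nth (fps_tan 1) j"
  by (simp add: tan_scale_fps[of c])

lemma zz_scale: "fps_nth (fps_tan (c::real) + inverse (fps_cos c)) j = c ^ j * fps_nth (fps_tan 1 + inverse (fps_cos 1)) j"
proof -
  have "fps_tan (c::real) + inverse (fps_cos c) = (fps_tan 1 + inverse (fps_cos 1)) oo (fps_const c * fps_X)"
    by (simp add: fps_compose_add_distrib tan_scale_fps[of c] cos_scale[of c] fps_inverse_compose)
  thus ?thesis by simp
qed

lemma tan_even: "fps_nth (fps_tan (1::real)) (2*k) = 0"
proof -
  have "fps_tan (-1::real) = - fps_tan 1"
    by (simp add: fps_tan_def fps_sin_even fps_cos_odd fps_divide_uminus)
  hence "fps_nth (fps_tan (-1::real)) (2*k) = - fps_nth (fps_tan 1) (2*k)" by simp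
  thus ?thesis by (simp add: tan_scale[of "-1"])
qed

lemma even_sum:
  fixes f :: "nat \<Rightarrow> 'a::comm_monoid_add"
  assumes "\<And>i. odd i \<Longrightarrow> f i = 0" "f 0 = 0"
  shows "(\<Sum>i=0..2*m. f i) = (\<Sum>k=1..m. f (2*k))"
proof (induction m)
  case 0 then show ?case using assms by simp
next
  case (Suc m)
  have "(\<Sum>i=0..2*Suc m. f i) = (\<Sum>i=0..2*m. f i) + f (2*m+1) + f (2*m+2)"
    by (simp add: add.assoc)
  also have "f (2*m+1) = 0" using assms by simp
  finally show ?case using Suc.IH by (simp add: add.commute)
qed


lemma fact_pred: "k \<ge> 1 \<Longrightarrow> (fact k :: real) = real k * fact (k - 1)"
  by (metis Suc_diff_1 fact_Suc less_eq_Suc_le of_nat_Suc One_nat_def Suc_le_eq mult.commute)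

lemma part1:
  assumes m: "m \<ge> 1" and n: "n \<ge> 2"
  shows "S (2*m) n (pi/2) = (-1)^m * real n
           + (1 / fact (2*m - 1)) * (\<Sum>k=1..m. real n ^ (2*k) * arctan_num (2*m) (2*k) * tangent_num (2*k - 1))"
proof -
  define t where "t j = fps_nth (fps_tan (1::real)) j" for j
  define Lt :: "real fps" where "Lt = Abs_fps (\<lambda>i. if i = 0 then 0 else real n ^ i * t (i-1) / real i)"
  define A :: "real fps" where "A = fps_atan"
  have dLt: "fps_deriv Lt = fps_const (real n) * fps_tan (real n)"
  proof (rule fps_ext)
    fix j
    show "fps_nth (fps_deriv Lt) j = fps_nth (fps_const (real n) * fps_tan (real n)) j"
      by (simp add: Lt_def tan_scale[of "real n"] t_def del: of_nat_Suc)
  qed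
  have dLA: "fps_deriv (Lt oo A) = fps_const (real n) * (fps_tan (real n) oo A) * iq2"
    by (simp add: A_def fps_compose_deriv dLt fps_compose_mult_distrib atan_deriv)
  have "S (2*m) n (pi/2) = fps_nth (fps_const (real n) * iq2 * (1 + fps_X * (fps_tan (real n) oo A))) (2*m)"
    using GF_nth[where n=n and \<alpha>="pi/2" and j="2*m"] GF_half_real[OF n] by (simp add: A_def)
  also have "fps_const (real n) * iq2 * (1 + fps_X * (fps_tan (real n) oo A)) = fps_const (real n) * iq2 + fps_X * fps_deriv (Lt oo A)"
    by (simp add: dLA algebra_simps)
  also have "fps_nth \<dots> (2*m) = real n * (-1)^m + real (2*m) * fps_nth (Lt oo A) (2*m)"
    using m by (simp add: iq2_def del: of_nat_Suc)
  also have "fps_nth (Lt oo A) (2*m) = (\<Sum>i=0..2*m. fps_nth Lt i * fps_nth (A^i) (2*m))"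
    by (simp add: fps_compose_nth)
  also have "\<dots> = (\<Sum>k=1..m. fps_nth Lt (2*k) * fps_nth (A^(2*k)) (2*m))"
  proof (rule even_sum)
    fix i :: nat assume "odd i"
    then obtain j where i: "i = 2*j + 1" by (metis oddE)
    show "fps_nth Lt i * fps_nth (A^i) (2*m) = 0"
      by (simp add: i Lt_def t_def tan_even)
  qed (simp add: Lt_def)
  also have "real (2*m) * (\<Sum>k=1..m. fps_nth Lt (2*k) * fps_nth (A^(2*k)) (2*m))
      = (1 / fact (2*m - 1)) * (\<Sum>k=1..m. real n ^ (2*k) * arctan_num (2*m) (2*k) * tangent_num (2*k - 1))"
  proof -
    have "real (2*m) * (fps_nth Lt (2*k) * fps_nth (A^(2*k)) (2*m))
          = (1 / fact (2*m - 1)) * (real n ^ (2*k) * arctan_num (2*m) (2*k) * tangent_num (2*k - 1))"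
      if k: "k \<in> {1..m}" for k
    proof -
      have f1: "(fact (2*m) :: real) = real (2*m) * fact (2*m - 1)" using m by (intro fact_pred) simp
      have f2: "(fact (2*k) :: real) = real (2*k) * fact (2*k - 1)" using k by (intro fact_pred) simp
      have k1: "k \<ge> 1" using k by simp
      show ?thesis
        unfolding arctan_num_fps tangent_num_fps f1 f2
        using k1 by (simp add: Lt_def t_def A_def field_simps)
    qed
    thus ?thesis by (simp add: sum_distrib_left)
  qed
  finally show ?thesis by simp
qed

lemma part2:
  assumes m: "m \<ge> 1" and n: "n \<ge> 2"
  shows "S m n (pi/4) = (if even m then (-1)^(m div 2) * real n else 0)
           + (1 / (2 * fact (m - 1))) * (\<Sum>k=1..m. (2 * real n) ^ k * arctan_num m k * zigzag_num (k - 1))"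
proof -
  define Zr :: "real fps" where "Zr = fps_tan 1 + inverse (fps_cos 1)"
  define Zc :: "real fps" where "Zc = fps_tan (real (2*n)) + inverse (fps_cos (real (2*n)))"
  define Lz :: "real fps" where "Lz = Abs_fps (\<lambda>i. if i = 0 then 0 else (2 * real n) ^ i * fps_nth Zr (i-1) / real i)"
  define A :: "real fps" where "A = fps_atan"
  have zz: "fps_nth Zc j = (2 * real n)^j * fps_nth Zr j" for j
    using zz_scale[of "real (2*n)" j] unfolding Zc_def Zr_def by simp
  have dLz: "fps_deriv Lz = fps_const (2 * real n) * Zc"
  proof (rule fps_ext)
    fix j
    show "fps_nth (fps_deriv Lz) j = fps_nth (fps_const (2 * real n) * Zc) j"
      by (simp add: Lz_def zz del: of_nat_Suc)
  qed
  have dLA: "fps_deriv (Lz oo A) = fps_const (2 * real n) * (Zc oo A) * iq2"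
    by (simp add: A_def fps_compose_deriv dLz fps_compose_mult_distrib atan_deriv)
  have "S m n (pi/4) = fps_nth (fps_const (real n) * iq2 * (1 + fps_X * (Zc oo A))) m"
    using GF_nth[where n=n and \<alpha>="pi/4" and j=m] GF_quarter_real[OF n] by (simp add: A_def Zc_def)
  also have "fps_const (real n) * iq2 * (1 + fps_X * (Zc oo A)) = fps_const (real n) * iq2 + fps_X * (fps_const (1/2) * fps_deriv (Lz oo A))"
  proof -
    have "fps_const (1/2) * fps_const (2 * real n) = fps_const (real n)" by simp
    thus ?thesis by (simp add: dLA algebra_simps)
  qed
  also have "fps_nth \<dots> m = (if even m then (-1)^(m div 2) * real n else 0) + (1/2) * real m * fps_nth (Lz oo A) m"
    using m by (simp add: iq2_def del: of_nat_Suc)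
  also have "fps_nth (Lz oo A) m = (\<Sum>i=0..m. fps_nth Lz i * fps_nth (A^i) m)"
    by (simp add: fps_compose_nth)
  also have "\<dots> = (\<Sum>k=1..m. fps_nth Lz k * fps_nth (A^k) m)"
    by (subst sum.atLeast_Suc_atMost) (simp_all add: Lz_def)
  also have "(1/2) * real m * (\<Sum>k=1..m. fps_nth Lz k * fps_nth (A^k) m)
      = (1 / (2 * fact (m - 1))) * (\<Sum>k=1..m. (2 * real n) ^ k * arctan_num m k * zigzag_num (k - 1))"
  proof -
    have "(1/2) * real m * (fps_nth Lz k * fps_nth (A^k) m)
          = (1 / (2 * fact (m - 1))) * ((2 * real n) ^ k * arctan_num m k * zigzag_num (k - 1))"
      if k: "k \<in> {1..m}" for k
    proof -
      have f1: "(fact m :: real) = real m * fact (m - 1)" using m by (intro fact_pred) simp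
      have f2: "(fact k :: real) = real k * fact (k - 1)" using k by (intro fact_pred) simp
      have k1: "k \<ge> 1" using k by simp
      show ?thesis
        unfolding arctan_num_fps zigzag_num_fps f1 f2
        using k1 by (simp add: Lz_def Zr_def A_def field_simps)
    qed
    thus ?thesis unfolding sum_distrib_left by (intro sum.cong refl) simp
  qed
  finally show ?thesis by simp
qed


theorem corollary6p6:
  fixes m n :: nat
  assumes "m \<ge> 1" and "n \<ge> 2"
  shows "S (2*m) n (pi/2) = (-1)^m * real n
           + (1 / fact (2*m - 1)) * (\<Sum>k=1..m. real n ^ (2*k) * arctan_num (2*m) (2*k) * tangent_num (2*k - 1))
       \<and> S m n (pi/4) = (if even m then (-1)^(m div 2) * real n else 0)
           + (1 / (2 * fact (m - 1))) * (\<Sum>k=1..m. (2 * real n) ^ k * arctan_num m k * zigzag_num (k - 1))"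
  using part1[OF assms] part2[OF assms] by blast

end
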